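(* Let $0=t_0<t_1<\dots<t_N=T$ be a temporal mesh with steps $\tau_k=t_k-t_{k-1}$, let $0<\alpha<1$, and let $\{B^{(n)}_k\}_{k=0}^n$, $0\le n\le N-1$, be real kernels satisfying: (A1) $B^{(n)}_0\ge B^{(n)}_1\ge\dots\ge B^{(n)}_n>0$ for $0\le n\le N-1$; (A2) there is $\pi_B>0$ with $B^{(n)}_{n-k}\ge\frac{1}{\pi_B\tau_{k+1}}\int_{t_k}^{t_{k+1}}\omega_{1-\alpha}(t_{n+1}-s)\,ds$ for $0\le k\le n$; (A3) there is $\rho>0$ with $\tau_k/\tau_{k+1}\le\rho$ for $1\le k\le N-1$. Let $\{g^n\}_{n=1}^N$ and $\{\lambda_l\}_{l=0}^{N-1}$ be nonnegative sequences with $\sum_{l=0}^{N-1}\lambda_l\le\Lambda$ for some $\Lambda>0$. Then for any nonnegative sequence $\{\psi^k\}_{k=0}^N$ satisfying $$\sum_{k=0}^nB^{(n)}_{n-k}(\psi^{k+1}-\psi^k)\le\sum_{k=0}^n\lambda_{n-k}\psi^k+g^{n+1},\qquad 0\le n\le N-1,$$ it holds, for $0\le n\le N-1$, $$\psi^{n+1}\le E_\alpha\big(\max(1,\rho)\pi_B\Lambda t_{n+1}^\alpha\big)\Big(\psi^0+\max_{0\le k\le n}\sum_{j=0}^k\tilde p^{(k)}_{k-j}g^{j+1}\Big).$$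
   Context: $\omega_{1-\alpha}(t)=t^{-\alpha}/\Gamma(1-\alpha)$. $E_\alpha(z)=\sum_{k=0}^\infty\frac{z^k}{\Gamma(1+k\alpha)}$ is the Mittag-Leffler function. The complementary kernels $\tilde p$ of $\{B^{(n)}_k\}$ are defined by $\tilde\theta^{(n)}_0=1/B^{(n)}_0$, $\tilde\theta^{(n)}_{n-k}=-\frac{1}{B^{(k)}_0}\sum_{j=k+1}^n\tilde\theta^{(n)}_{n-j}B^{(j)}_{j-k}$ for $0\le k\le n-1$, and $\tilde p^{(n)}_{n-k}=\sum_{j=k}^n\tilde\theta^{(j)}_{j-k}$ for $0\le k\le n$. *)

theory Defs
  imports "HOL-Analysis.Analysis"
begin

text \<open>Kernel omega_{1-alpha}(t) = t^(-alpha) / Gamma(1-alpha).\<close>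
definition omega :: "real \<Rightarrow> real \<Rightarrow> real" where
  "omega \<alpha> s = s powr (-\<alpha>) / Gamma (1 - \<alpha>)"

definition mittag_leffler :: "real \<Rightarrow> real \<Rightarrow> real" where
  "mittag_leffler \<alpha> z = (\<Sum>k. z ^ k / Gamma (1 + real k * \<alpha>))"

text \<open>theta B n m = theta^{(n)}_m, where B n k = B^{(n)}_k.
  For m = n - k with 0 <= k <= n-1:
  theta^{(n)}_{n-k} = -(1/B^{(k)}_0) * sum_{j=k+1}^n theta^{(n)}_{n-j} B^{(j)}_{j-k}.\<close>
function theta :: "(nat \<Rightarrow> nat \<Rightarrow> real) \<Rightarrow> nat \<Rightarrow> nat \<Rightarrow> real" where
  "theta B n m =
     (if m = 0 then 1 / B n 0
      else - (1 / B (n - m) 0) *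
        (\<Sum>j\<in>{n - m + 1..n}. theta B n (n - j) * B j (j - (n - m))))"
  by auto
termination by (relation "Wellfounded.measure (\<lambda>(B, n, m). m)") auto

definition ptilde :: "(nat \<Rightarrow> nat \<Rightarrow> real) \<Rightarrow> nat \<Rightarrow> nat \<Rightarrow> real" where
  "ptilde B n m = (\<Sum>j\<in>{n - m..n}. theta B j (j - (n - m)))"

end

theory Submission
  imports Defs
begin


declare theta.simps[simp del]

lemma theta_diag: "theta B n 0 = 1 / B n 0"
  by (subst theta.simps) simp

lemma theta_rec:
  assumes "k < n"
  shows "theta B n (n - k) = - (1 / B k 0) * (\<Sum>j\<in>{k+1..n}. theta B n (n - j) * B j (j - k))"
  using assms by (subst theta.simps) simp

lemma theta_inv:
  assumes nz: "B k 0 \<noteq> 0" and kn: "k \<le> n"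
  shows "(\<Sum>j\<in>{k..n}. theta B n (n - j) * B j (j - k)) = (if k = n then 1 else 0)"
proof (cases "k = n")
  case True
  then show ?thesis using nz by (simp add: theta_diag)
next
  case False
  then have kn': "k < n" using kn by simp
  have "{k..n} = insert k {k+1..n}" using kn by auto
  then have "(\<Sum>j\<in>{k..n}. theta B n (n - j) * B j (j - k)) =
     theta B n (n - k) * B k 0 + (\<Sum>j\<in>{k+1..n}. theta B n (n - j) * B j (j - k))"
    by simp
  also have "\<dots> = 0" using nz by (simp add: theta_rec[OF kn'])
  finally show ?thesis using False by simp
qed

lemma ptilde_eq:
  assumes "k \<le> n"
  shows "ptilde B n (n - k) = (\<Sum>j\<in>{k..n}. theta B j (j - k))"
  using assms by (simp add: ptilde_def)

lemma PL_one:
  assumes nz: "\<forall>k\<le>n. B k 0 \<noteq> 0" and kn: "k \<le> n"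
  shows "(\<Sum>i\<in>{k..n}. ptilde B n (n - i) * B i (i - k)) = 1"
  using kn nz
proof (induction n)
  case 0
  then show ?case by (simp add: ptilde_def theta_diag)
next
  case (Suc n)
  show ?case
  proof (cases "k = Suc n")
    case True
    then show ?thesis using Suc.prems by (simp add: ptilde_def theta_diag)
  next
    case False
    then have kn: "k \<le> n" using Suc.prems by simp
    have split: "\<And>i. i \<in> {k..n} \<Longrightarrow> ptilde B (Suc n) (Suc n - i) = ptilde B n (n - i) + theta B (Suc n) (Suc n - i)"
      by (simp add: ptilde_eq)
    have "(\<Sum>i\<in>{k..Suc n}. ptilde B (Suc n) (Suc n - i) * B i (i - k))
       = (\<Sum>i\<in>{k..n}. ptilde B (Suc n) (Suc n - i) * B i (i - k)) + ptilde B (Suc n) 0 * B (Suc n) (Suc n - k)"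
      using kn by (simp add: atLeastAtMostSuc_conv)
    also have "ptilde B (Suc n) 0 = theta B (Suc n) (Suc n - Suc n)" by (simp add: ptilde_def)
    also have "(\<Sum>i\<in>{k..n}. ptilde B (Suc n) (Suc n - i) * B i (i - k))
       = (\<Sum>i\<in>{k..n}. ptilde B n (n - i) * B i (i - k)) + (\<Sum>i\<in>{k..n}. theta B (Suc n) (Suc n - i) * B i (i - k))"
      by (simp add: split distrib_right sum.distrib)
    also have "(\<Sum>i\<in>{k..n}. ptilde B n (n - i) * B i (i - k)) = 1"
      using Suc.IH kn Suc.prems by simp
    finally have "(\<Sum>i\<in>{k..Suc n}. ptilde B (Suc n) (Suc n - i) * B i (i - k))
       = 1 + (\<Sum>i\<in>{k..Suc n}. theta B (Suc n) (Suc n - i) * B i (i - k))"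
      using kn by (simp add: atLeastAtMostSuc_conv)
    also have "(\<Sum>i\<in>{k..Suc n}. theta B (Suc n) (Suc n - i) * B i (i - k)) = 0"
      using theta_inv[of B k "Suc n"] Suc.prems False by simp
    finally show ?thesis by simp
  qed
qed

lemma sum_swap_tri:
  "(\<Sum>i\<le>n. \<Sum>k\<le>i. f i k) = (\<Sum>k\<le>n. \<Sum>i\<in>{k..n}. f i (k::nat))"
proof (induction n)
  case 0 then show ?case by simp
next
  case (Suc n)
  have "(\<Sum>k\<le>Suc n. \<Sum>i\<in>{k..Suc n}. f i k) = (\<Sum>k\<le>n. \<Sum>i\<in>{k..Suc n}. f i k) + f (Suc n) (Suc n)"
    by simp
  also have "(\<Sum>k\<le>n. \<Sum>i\<in>{k..Suc n}. f i k) = (\<Sum>k\<le>n. (\<Sum>i\<in>{k..n}. f i k) + f (Suc n) k)"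
    by (intro sum.cong) (auto simp: atLeastAtMostSuc_conv add_ac)
  finally show ?case using Suc by (simp add: sum.distrib add.commute)
qed

lemma telescope:
  assumes nz: "\<forall>k\<le>n. B k 0 \<noteq> 0"
  shows "x (Suc n) - x 0 = (\<Sum>i\<le>n. ptilde B n (n - i) * (\<Sum>k\<le>i. B i (i - k) * (x (Suc k) - x k)))"
proof -
  have "(\<Sum>i\<le>n. ptilde B n (n - i) * (\<Sum>k\<le>i. B i (i - k) * (x (Suc k) - x k)))
      = (\<Sum>i\<le>n. \<Sum>k\<le>i. ptilde B n (n - i) * B i (i - k) * (x (Suc k) - x (k::nat)))"
    by (simp add: sum_distrib_left mult.assoc)
  also have "\<dots> = (\<Sum>k\<le>n. \<Sum>i\<in>{k..n}. ptilde B n (n - i) * B i (i - k) * (x (Suc k) - x k))"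
    by (rule sum_swap_tri)
  also have "\<dots> = (\<Sum>k\<le>n. (\<Sum>i\<in>{k..n}. ptilde B n (n - i) * B i (i - k)) * (x (Suc k) - x k))"
    by (simp add: sum_distrib_right)
  also have "\<dots> = (\<Sum>k\<le>n. (x (Suc k) - x k))"
    using PL_one[of n B] nz by simp
  also have "\<dots> = x (Suc n) - x 0"
    by (induction n) auto
  finally show ?thesis by simp
qed

lemma B_ge_diag:
  fixes B :: "nat \<Rightarrow> nat \<Rightarrow> real"
  assumes "\<forall>k<i. B i (Suc k) \<le> B i k" "l \<le> i"
  shows "B i l \<ge> B i i"
  using assms(2)
proof (induction "i - l" arbitrary: l)
  case 0 then have "l = i" by simp
  then show ?case by simp
next
  case (Suc d)
  then have "B i (Suc l) \<ge> B i i" by simp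
  moreover have "B i (Suc l) \<le> B i l" using assms(1) Suc by simp
  ultimately show ?case by simp
qed

lemma ptilde_nonneg:
  assumes hB: "\<forall>i\<le>n. (\<forall>k<i. B i (Suc k) \<le> B i k) \<and> B i i > 0"
  shows "\<forall>i\<le>n. ptilde B n (n - i) \<ge> 0"
proof -
  have pos: "B i 0 > 0" if "i \<le> n" for i
    using B_ge_diag[of i B 0] hB that by force
  then have nz: "\<forall>k\<le>n. B k 0 \<noteq> 0" by (metis less_irrefl)
  have "ptilde B n (n - (n - d)) \<ge> 0" if "d \<le> n" for d
    using that
  proof (induction d rule: less_induct)
    case (less d)
    show ?case
    proof (cases "d = 0")
      case True
      then show ?thesis using pos[of n] by (simp add: ptilde_def theta_diag)
    next
      case False
      define k where "k = n - d"
      have kn: "k < n" using False less.prems k_def by simp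
      have IH: "ptilde B n (n - i) \<ge> 0" if "k < i" "i \<le> n" for i
        using less.IH[of "n - i"] that k_def less.prems by simp
      have e1: "(\<Sum>i\<in>{k..n}. ptilde B n (n - i) * B i (i - k)) = 1"
        using PL_one[of n B] nz kn by simp
      have e2: "(\<Sum>i\<in>{Suc k..n}. ptilde B n (n - i) * B i (i - Suc k)) = 1"
        using PL_one[of n B] nz kn by simp
      have "{k..n} = insert k {Suc k..n}" using kn by auto
      then have "ptilde B n (n - k) * B k 0 + (\<Sum>i\<in>{Suc k..n}. ptilde B n (n - i) * B i (i - k))
          = (\<Sum>i\<in>{Suc k..n}. ptilde B n (n - i) * B i (i - Suc k))"
        using e1 e2 by simp
      then have eq: "ptilde B n (n - k) * B k 0 = (\<Sum>i\<in>{Suc k..n}. ptilde B n (n - i) * (B i (i - Suc k) - B i (i - k)))"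
        by (simp add: sum_subtractf right_diff_distrib)
      have "(\<Sum>i\<in>{Suc k..n}. ptilde B n (n - i) * (B i (i - Suc k) - B i (i - k))) \<ge> 0"
      proof (intro sum_nonneg mult_nonneg_nonneg)
        fix i assume i: "i \<in> {Suc k..n}"
        show "ptilde B n (n - i) \<ge> 0" using IH i by auto
        have "i - k = Suc (i - Suc k)" using i by auto
        then show "B i (i - Suc k) - B i (i - k) \<ge> 0"
          using hB i by (metis atLeastAtMost_iff diff_ge_0_iff_ge diff_less zero_less_Suc less_le_trans le_refl Suc_le_lessD)
      qed
      then have "ptilde B n (n - k) * B k 0 \<ge> 0" using eq by simp
      then show ?thesis using pos[of k] kn k_def by (simp add: zero_le_mult_iff)
    qed
  qed
  then show ?thesis by (metis diff_diff_cancel diff_le_self)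
qed


lemma Gamma_pos_real: "x > 0 \<Longrightarrow> Gamma (x::real) > 0"
  by (rule Gamma_real_pos)

lemma Gamma_step_bound:
  fixes \<alpha> :: real and k d :: nat
  assumes "\<alpha> > 0" "real d * \<alpha> \<ge> 1"
  shows "Gamma (1 + real (k + d) * \<alpha>) \<ge> (1 + real k * \<alpha>) * Gamma (1 + real k * \<alpha>)"
proof -
  have "1 + real k * \<alpha> > 0" using assms by (simp add: add_pos_nonneg)
  then have nz: "1 + real k * \<alpha> \<notin> \<int>\<^sub>\<le>\<^sub>0"
    using nonpos_Ints_nonpos by force
  have e: "Gamma (1 + real k * \<alpha> + 1) = (1 + real k * \<alpha>) * Gamma (1 + real k * \<alpha>)"
    by (rule Gamma_plus1[OF nz])
  have le: "1 + real k * \<alpha> + 1 \<le> 1 + real (k + d) * \<alpha>"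
    using assms by (simp add: algebra_simps)
  have ge: "1 + real k * \<alpha> + 1 \<ge> 3/2" using assms by simp
  have "Gamma (1 + real k * \<alpha> + 1) \<le> Gamma (1 + real (k + d) * \<alpha>)"
  proof (cases "1 + real k * \<alpha> + 1 < 1 + real (k + d) * \<alpha>")
    case True then show ?thesis using Gamma_real_strict_mono[OF ge True] by simp
  next
    case False then have "1 + real k * \<alpha> + 1 = 1 + real (k + d) * \<alpha>" using le by simp
    then show ?thesis by (metis order.refl)
  qed
  then show ?thesis using e by simp
qed

lemma ml_summable:
  fixes \<alpha> z :: real
  assumes a: "\<alpha> > 0" and z: "z \<ge> 0"
  shows "summable (\<lambda>k. z ^ k / Gamma (1 + real k * \<alpha>))"
proof -
  define u where "u k = z ^ k / Gamma (1 + real k * \<alpha>)" for k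
  define d where "d = nat \<lceil>1 / \<alpha>\<rceil>"
  have "real_of_int \<lceil>1 / \<alpha>\<rceil> \<ge> 1 / \<alpha>" by (rule le_of_int_ceiling)
  moreover have "1 / \<alpha> > 0" using a by simp
  ultimately have "\<lceil>1 / \<alpha>\<rceil> \<ge> 1" by linarith
  then have dpos: "d \<ge> 1" unfolding d_def by (metis nat_mono nat_one_as_int)
  have da: "real d * \<alpha> \<ge> 1"
  proof -
    have "real d \<ge> 1 / \<alpha>" unfolding d_def by linarith
    then show ?thesis using a by (simp add: field_simps)
  qed
  have upos: "u k \<ge> 0" for k using z a unfolding u_def
    by (intro divide_nonneg_pos) (auto intro!: Gamma_real_pos add_pos_nonneg)
  define K where "K = nat \<lceil>2 * z ^ d / \<alpha>\<rceil>"
  have step: "u (k + d) \<le> u k / 2" if "k \<ge> K" for k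
  proof -
    have Gk: "Gamma (1 + real k * \<alpha>) > 0" using a by (intro Gamma_real_pos add_pos_nonneg) auto
    have G: "Gamma (1 + real (k + d) * \<alpha>) \<ge> (1 + real k * \<alpha>) * Gamma (1 + real k * \<alpha>)"
      by (rule Gamma_step_bound[OF a da])
    have "real k \<ge> 2 * z ^ d / \<alpha>" using that unfolding K_def by linarith
    then have kz: "real k * \<alpha> \<ge> 2 * z ^ d" using a by (simp add: field_simps)
    have "u (k + d) = z ^ d * z ^ k / Gamma (1 + real (k + d) * \<alpha>)"
      by (simp add: u_def power_add)
    also have "\<dots> \<le> z ^ d * z ^ k / ((1 + real k * \<alpha>) * Gamma (1 + real k * \<alpha>))"
      using G Gk a z by (intro divide_left_mono) (auto intro!: mult_pos_pos add_pos_nonneg)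
    also have "\<dots> = (z ^ d / (1 + real k * \<alpha>)) * u k" by (simp add: u_def)
    also have "\<dots> \<le> (1/2) * u k"
    proof (intro mult_right_mono upos)
      have p: "1 + real k * \<alpha> > 0" using a by (simp add: add_pos_nonneg)
      have "z ^ d \<le> (1 + real k * \<alpha>) / 2" using kz by simp
      then show "z ^ d / (1 + real k * \<alpha>) \<le> 1/2" using p by (simp add: divide_le_eq mult.commute)
    qed
    finally show ?thesis by simp
  qed
  define r where "r = (1/2::real) powr (1 / real d)"
  have r0: "r > 0" using dpos by (auto simp: r_def)
  have r1: "r < 1" unfolding r_def using dpos powr_less_mono2[of "1 / real d" "1/2" 1] by simp
  have rd: "r ^ d = 1/2"
  proof -
    have "r ^ d = (1/2::real) powr (real d * (1 / real d))"
      unfolding r_def by (rule powr_power) simp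
    also have "\<dots> = (1/2::real) powr 1" using dpos by simp
    finally show ?thesis by simp
  qed
  define A where "A = Max ((\<lambda>k. u k / r ^ k) ` {..<K + d})"
  have bound: "u k \<le> A * r ^ k" for k
  proof (induction k rule: less_induct)
    case (less k)
    show ?case
    proof (cases "k < K + d")
      case True
      then have "u k / r ^ k \<le> A" unfolding A_def by (intro Max_ge) auto
      then show ?thesis using r0 by (simp add: field_simps)
    next
      case False
      define k' where "k' = k - d"
      have k': "k = k' + d" "k' \<ge> K" using False unfolding k'_def by arith+
      have "k' < k" using k' dpos by simp
      then have "u k' \<le> A * r ^ k'" by (rule less.IH)
      moreover have "u k \<le> u k' / 2" using step k' by simp
      ultimately have "u k \<le> A * r ^ k' * r ^ d" unfolding rd by linarith
      then show ?thesis using k' by (simp add: power_add mult.assoc)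
    qed
  qed
  have "summable (\<lambda>k. A * r ^ k)" using r0 r1 by (intro summable_mult summable_geometric) simp
  then show ?thesis
  proof (rule summable_comparison_test'[where N=0])
    fix n :: nat
    have "norm (z ^ n / Gamma (1 + real n * \<alpha>)) = u n" using upos[of n] unfolding u_def real_norm_def by (rule abs_of_nonneg)
    then show "norm (z ^ n / Gamma (1 + real n * \<alpha>)) \<le> A * r ^ n" using bound[of n] by simp
  qed
qed

lemma ml_zero: "mittag_leffler \<alpha> 0 = 1"
proof -
  have "mittag_leffler \<alpha> 0 = (\<Sum>k. 0 ^ k / Gamma (1 + real k * \<alpha>))" by (simp add: mittag_leffler_def)
  also have "\<dots> = (\<Sum>k\<in>{0}. (0::real) ^ k / Gamma (1 + real k * \<alpha>))"
    by (rule suminf_finite) auto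
  finally show ?thesis by simp
qed

lemma ml_mono:
  assumes a: "\<alpha> > 0" and xy: "0 \<le> x" "x \<le> y"
  shows "mittag_leffler \<alpha> x \<le> mittag_leffler \<alpha> y"
  unfolding mittag_leffler_def
proof (rule suminf_le)
  fix k show "x ^ k / Gamma (1 + real k * \<alpha>) \<le> y ^ k / Gamma (1 + real k * \<alpha>)"
    using a xy by (intro divide_right_mono power_mono) (auto intro!: Gamma_real_nonneg add_pos_nonneg)
qed (use ml_summable a xy in auto)

lemma ml_ge1:
  assumes a: "\<alpha> > 0" and x: "0 \<le> x"
  shows "mittag_leffler \<alpha> x \<ge> 1"
  using ml_mono[OF a order.refl x] ml_zero[of \<alpha>] by simp


lemma Gamma_1ma: "0 < \<alpha> \<Longrightarrow> \<alpha> < 1 \<Longrightarrow> Gamma (2 - \<alpha>) = (1 - \<alpha>) * Gamma (1 - (\<alpha>::real))"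
proof -
  assume a: "0 < \<alpha>" "\<alpha> < 1"
  have "1 - \<alpha> \<notin> \<int>\<^sub>\<le>\<^sub>0" using a nonpos_Ints_nonpos by force
  then have "Gamma (1 - \<alpha> + 1) = (1 - \<alpha>) * Gamma (1 - \<alpha>)" by (rule Gamma_plus1)
  moreover have "1 - \<alpha> + 1 = 2 - \<alpha>" by simp
  ultimately show ?thesis by simp
qed

lemma Gamma_succ:
  fixes \<beta> :: real assumes a: "0 < \<beta>" shows "Gamma (1 + \<beta>) = \<beta> * Gamma \<beta>"
proof -
  have "\<beta> \<notin> \<int>\<^sub>\<le>\<^sub>0" using a nonpos_Ints_nonpos by force
  then have "Gamma (\<beta> + 1) = \<beta> * Gamma \<beta>" by (rule Gamma_plus1)
  then show ?thesis by (simp add: add.commute)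
qed

lemma kernel_int:
  assumes a: "0 < \<alpha>" "\<alpha> < 1" and ab: "a \<le> b" "b \<le> X"
  shows "((\<lambda>s. omega \<alpha> (X - s)) has_integral
           ((X - a) powr (1 - \<alpha>) - (X - b) powr (1 - \<alpha>)) / Gamma (2 - \<alpha>)) {a..b}"
proof -
  define G where "G s = (- 1 / Gamma (2 - \<alpha>)) * (X - s) powr (1 - \<alpha>)" for s
  have G2: "Gamma (2 - \<alpha>) = (1 - \<alpha>) * Gamma (1 - \<alpha>)" by (rule Gamma_1ma[OF a])
  have Gp: "Gamma (1 - \<alpha>) > 0" using a by (intro Gamma_real_pos) auto
  have "((\<lambda>s. omega \<alpha> (X - s)) has_integral G b - G a) {a..b}"
  proof (rule fundamental_theorem_of_calculus_interior[OF ab(1)])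
    have "continuous_on {a..b} (\<lambda>s. (X - s) powr (1 - \<alpha>))"
      by (rule continuous_on_powr') (use a ab in \<open>auto intro!: continuous_intros\<close>)
    then show "continuous_on {a..b} G" unfolding G_def
      by (rule continuous_on_mult_left)
  next
    fix s assume s: "s \<in> {a<..<b}"
    then have pos: "X - s > 0" using ab by auto
    have d: "((\<lambda>s. X - s) has_real_derivative -1) (at s)"
      by (auto intro!: derivative_eq_intros)
    have "((\<lambda>s. (X - s) powr (1 - \<alpha>)) has_real_derivative (1 - \<alpha>) * (X - s) powr (1 - \<alpha> - real 1) * (-1)) (at s)"
      by (rule DERIV_fun_powr[OF d pos])
    from DERIV_cmult[OF this, of "- 1 / Gamma (2 - \<alpha>)"]
    have "(G has_real_derivative (- 1 / Gamma (2 - \<alpha>)) * ((1 - \<alpha>) * (X - s) powr (1 - \<alpha> - real 1) * (-1))) (at s)"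
      unfolding G_def .
    also have "(- 1 / Gamma (2 - \<alpha>)) * ((1 - \<alpha>) * (X - s) powr (1 - \<alpha> - real 1) * (-1))
       = (1 - \<alpha>) * (X - s) powr (- \<alpha>) / Gamma (2 - \<alpha>)" by simp
    also have "(1 - \<alpha>) * (X - s) powr (- \<alpha>) / Gamma (2 - \<alpha>) = omega \<alpha> (X - s)"
      unfolding omega_def G2 using a Gp by simp
    finally show "(G has_vector_derivative omega \<alpha> (X - s)) (at s)"
      by (simp add: has_real_derivative_iff_has_vector_derivative)
  qed
  also have "G b - G a = ((X - a) powr (1 - \<alpha>) - (X - b) powr (1 - \<alpha>)) / Gamma (2 - \<alpha>)"
    unfolding G_def by (simp add: diff_divide_distrib)
  finally show ?thesis .
qed

lemma pow_int:
  fixes \<beta> a b :: real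
  assumes b: "0 < \<beta>" and ab: "0 \<le> a" "a \<le> b"
  shows "((\<lambda>s. s powr (\<beta> - 1) / Gamma \<beta>) has_integral (b powr \<beta> - a powr \<beta>) / Gamma (1 + \<beta>)) {a..b}"
proof -
  define F where "F s = (1 / Gamma (1 + \<beta>)) * s powr \<beta>" for s
  have G1: "Gamma (1 + \<beta>) = \<beta> * Gamma \<beta>" by (rule Gamma_succ[OF b])
  have Gp: "Gamma \<beta> > 0" using b by (intro Gamma_real_pos) auto
  have "((\<lambda>s. s powr (\<beta> - 1) / Gamma \<beta>) has_integral F b - F a) {a..b}"
  proof (rule fundamental_theorem_of_calculus_interior[OF ab(2)])
    have "continuous_on {a..b} (\<lambda>s. s powr \<beta>)"
      by (rule continuous_on_powr') (use b ab in \<open>auto intro!: continuous_intros\<close>)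
    then show "continuous_on {a..b} F" unfolding F_def
      by (rule continuous_on_mult_left)
  next
    fix s assume s: "s \<in> {a<..<b}"
    then have pos: "s > 0" using ab by auto
    have d: "((\<lambda>s. s) has_real_derivative 1) (at s)"
      by (auto intro!: derivative_eq_intros)
    have "((\<lambda>s. s powr \<beta>) has_real_derivative \<beta> * s powr (\<beta> - real 1) * 1) (at s)"
      by (rule DERIV_fun_powr[OF d pos])
    from DERIV_cmult[OF this, of "1 / Gamma (1 + \<beta>)"]
    have "(F has_real_derivative (1 / Gamma (1 + \<beta>)) * (\<beta> * s powr (\<beta> - real 1) * 1)) (at s)"
      unfolding F_def .
    also have "(1 / Gamma (1 + \<beta>)) * (\<beta> * s powr (\<beta> - real 1) * 1) = \<beta> * s powr (\<beta> - 1) / Gamma (1 + \<beta>)"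
      by simp
    also have "\<beta> * s powr (\<beta> - 1) / Gamma (1 + \<beta>) = s powr (\<beta> - 1) / Gamma \<beta>"
      unfolding G1 using b Gp by simp
    finally show "(F has_vector_derivative s powr (\<beta> - 1) / Gamma \<beta>) (at s)"
      by (simp add: has_real_derivative_iff_has_vector_derivative)
  qed
  also have "F b - F a = (b powr \<beta> - a powr \<beta>) / Gamma (1 + \<beta>)"
    unfolding F_def by (simp add: diff_divide_distrib)
  finally show ?thesis .
qed

lemma beta_conv:
  assumes a: "0 < \<alpha>" "\<alpha> < 1" and x: "x > 0" and b: "\<beta> > 0"
  shows "((\<lambda>s. omega \<alpha> (x - s) * (s powr (\<beta> - 1) / Gamma \<beta>)) has_integral
            x powr (\<beta> - \<alpha>) / Gamma (1 + \<beta> - \<alpha>)) {0..x}"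
proof -
  have h: "((\<lambda>u. u powr (\<beta> - 1) * (1 - u) powr ((1 - \<alpha>) - 1)) has_integral Beta \<beta> (1 - \<alpha>)) (cbox 0 1)"
    using has_integral_Beta_real[of \<beta> "1 - \<alpha>"] a b by simp
  from has_integral_affinity[OF h, of "1 / x" 0] x
  have h2: "((\<lambda>s. (s / x) powr (\<beta> - 1) * (1 - s / x) powr (- \<alpha>)) has_integral x * Beta \<beta> (1 - \<alpha>))
              ((*) x ` {0..1})"
    by simp
  have img: "(*) x ` {0..1} = {0..x}" using x by (simp add: image_mult_atLeastAtMost)
  define c where "c = x powr (\<beta> - 1 - \<alpha>) / (Gamma (1 - \<alpha>) * Gamma \<beta>)"
  have h3: "((\<lambda>s. c * ((s / x) powr (\<beta> - 1) * (1 - s / x) powr (- \<alpha>))) has_integral c * (x * Beta \<beta> (1 - \<alpha>))) {0..x}"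
    using has_integral_mult_right[OF h2[unfolded img]] by simp
  have Ga: "Gamma (1 - \<alpha>) > 0" using a by (intro Gamma_real_pos) auto
  have Gb: "Gamma \<beta> > 0" using b by (intro Gamma_real_pos) auto
  have Gc: "Gamma (1 + \<beta> - \<alpha>) > 0" using a b by (intro Gamma_real_pos) auto
  have eqf: "c * ((s / x) powr (\<beta> - 1) * (1 - s / x) powr (- \<alpha>)) = omega \<alpha> (x - s) * (s powr (\<beta> - 1) / Gamma \<beta>)"
    if s: "s \<in> {0..x}" for s
  proof -
    have "1 - s / x = (x - s) / x" using x by (simp add: field_simps)
    then have e2: "(1 - s / x) powr (- \<alpha>) = (x - s) powr (- \<alpha>) / x powr (- \<alpha>)" by (simp add: powr_divide)
    have e1: "(s / x) powr (\<beta> - 1) = s powr (\<beta> - 1) / x powr (\<beta> - 1)" by (rule powr_divide)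
    have e3: "x powr (\<beta> - 1 - \<alpha>) = x powr (\<beta> - 1) * x powr (- \<alpha>)"
      using x by (simp add: powr_add[symmetric])
    have p1: "x powr (\<beta> - 1) > 0" and p2: "x powr (- \<alpha>) > 0" using x by auto
    show ?thesis unfolding c_def omega_def e1 e2 e3 using p1 p2 Ga Gb
      by (simp add: field_simps)
  qed
  have val: "c * (x * Beta \<beta> (1 - \<alpha>)) = x powr (\<beta> - \<alpha>) / Gamma (1 + \<beta> - \<alpha>)"
  proof -
    have "x powr (\<beta> - 1 - \<alpha>) * x = x powr (\<beta> - \<alpha>)"
      using x by (simp add: powr_add[symmetric] powr_diff)
    moreover have "\<beta> + (1 - \<alpha>) = 1 + \<beta> - \<alpha>" by simp
    ultimately show ?thesis unfolding c_def Beta_def using Ga Gb Gc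
      by (simp add: field_simps)
  qed
  show ?thesis using h3 eqf val has_integral_cong[of "{0..x}"] by (metis (no_types, lifting))
qed


lemma mesh_le:
  fixes t :: "nat \<Rightarrow> real"
  assumes tm: "\<forall>k<n. t k < t (Suc k)" and kl: "k \<le> l" and ln: "l \<le> n"
  shows "t k \<le> t l"
  using kl ln
proof (induction l)
  case 0 then show ?case by simp
next
  case (Suc l)
  show ?case
  proof (cases "k = Suc l")
    case True then show ?thesis by simp
  next
    case False
    then have "t k \<le> t l" using Suc by simp
    moreover have "t l < t (Suc l)" using tm Suc.prems by simp
    ultimately show ?thesis by simp
  qed
qed

lemma mesh_less:
  fixes t :: "nat \<Rightarrow> real"
  assumes tm: "\<forall>k<n. t k < t (Suc k)" and kl: "k < l" and ln: "l \<le> n"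
  shows "t k < t l"
proof -
  have "t k < t (Suc k)" using tm kl ln by simp
  also have "t (Suc k) \<le> t l" using mesh_le[OF tm] kl ln by simp
  finally show ?thesis .
qed

lemma mesh_integral:
  fixes t :: "nat \<Rightarrow> real" and f :: "real \<Rightarrow> real"
  assumes tm: "\<forall>k<n. t k < t (Suc k)" and rn: "r \<le> n"
    and int: "f integrable_on {t r..t n}"
  shows "integral {t r..t n} f = (\<Sum>k\<in>{r..<n}. integral {t k..t (Suc k)} f)"
  using rn int tm
proof (induction n)
  case 0
  then show ?case by simp
next
  case (Suc n)
  show ?case
  proof (cases "r = Suc n")
    case True then show ?thesis by simp
  next
    case False
    then have rn: "r \<le> n" using Suc.prems by simp
    have tm': "\<forall>k<n. t k < t (Suc k)" using Suc.prems by simp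
    have le1: "t r \<le> t n" using mesh_le[OF tm' rn] by simp
    have le2: "t n \<le> t (Suc n)" using Suc.prems(3) by (metis lessI less_imp_le)
    have i1: "f integrable_on {t r..t n}"
      using integrable_on_subinterval[OF Suc.prems(2)] le2 by simp
    have "integral {t r..t (Suc n)} f = integral {t r..t n} f + integral {t n..t (Suc n)} f"
      using Henstock_Kurzweil_Integration.integral_combine[OF le1 le2 Suc.prems(2)] by simp
    also have "integral {t r..t n} f = (\<Sum>k\<in>{r..<n}. integral {t k..t (Suc k)} f)"
      using Suc.IH[OF rn i1 tm'] .
    finally show ?thesis using rn by simp
  qed
qed

lemma abel_ineq:
  fixes a x y :: "nat \<Rightarrow> real"
  assumes mono: "\<forall>l. p \<le> l \<longrightarrow> Suc l < q \<longrightarrow> a l \<le> a (Suc l)"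
    and a0: "p < q \<longrightarrow> a p \<ge> 0"
    and tails: "\<forall>r. p \<le> r \<longrightarrow> r < q \<longrightarrow> (\<Sum>l\<in>{r..<q}. x l) \<le> (\<Sum>l\<in>{r..<q}. y l)"
  shows "(\<Sum>l\<in>{p..<q}. a l * x l) \<le> (\<Sum>l\<in>{p..<q}. a l * y l)"
proof -
  define z where "z l = y l - x l" for l
  define D where "D r = (\<Sum>l\<in>{r..<q}. z l)" for r
  have Dnn: "D r \<ge> 0" if "p \<le> r" "r < q" for r
    using tails that unfolding D_def z_def by (simp add: sum_subtractf)
  have claim: "(\<Sum>l\<in>{q - d..<q}. a l * z l) \<ge> a (q - d) * D (q - d)" if "d \<ge> 1" "q - d \<ge> p" "d \<le> q" for d
    using that
  proof (induction d)
    case 0 then show ?case by simp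
  next
    case (Suc d)
    show ?case
    proof (cases "d = 0")
      case True
      then have "{q - Suc d..<q} = {q - 1}" using Suc.prems by auto
      then show ?thesis using True by (simp add: D_def)
    next
      case False
      define r where "r = q - Suc d"
      have rq: "Suc r = q - d" using Suc.prems False unfolding r_def by simp
      have IH: "(\<Sum>l\<in>{Suc r..<q}. a l * z l) \<ge> a (Suc r) * D (Suc r)"
        using Suc.IH Suc.prems False rq by simp
      have s1: "{r..<q} = insert r {Suc r..<q}" using Suc.prems False unfolding r_def by auto
      have "(\<Sum>l\<in>{r..<q}. a l * z l) = a r * z r + (\<Sum>l\<in>{Suc r..<q}. a l * z l)"
        using s1 by simp
      also have "\<dots> \<ge> a r * z r + a (Suc r) * D (Suc r)" using IH by simp
      also have "a (Suc r) * D (Suc r) \<ge> a r * D (Suc r)"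
      proof (rule mult_right_mono)
        show "a r \<le> a (Suc r)" using mono Suc.prems False rq unfolding r_def by auto
        show "D (Suc r) \<ge> 0" using Dnn Suc.prems False rq unfolding r_def by auto
      qed
      then have "a r * z r + a (Suc r) * D (Suc r) \<ge> a r * z r + a r * D (Suc r)" by simp
      also have "a r * z r + a r * D (Suc r) = a r * D r"
        unfolding D_def using s1 by (simp add: distrib_left)
      finally show ?thesis unfolding r_def by simp
    qed
  qed
  show ?thesis
  proof (cases "p < q")
    case False then show ?thesis by simp
  next
    case True
    have "(\<Sum>l\<in>{p..<q}. a l * z l) \<ge> a p * D p"
      using claim[of "q - p"] True by simp
    moreover have "a p * D p \<ge> 0" using a0 Dnn True by simp
    ultimately have "(\<Sum>l\<in>{p..<q}. a l * z l) \<ge> 0" by linarith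
    then show ?thesis unfolding z_def by (simp add: right_diff_distrib sum_subtractf)
  qed
qed

lemma cheb:
  fixes Fd w :: "real \<Rightarrow> real"
  assumes pq: "p < q"
    and iF: "(Fd has_integral dF) {p..q}"
    and iw: "(w has_integral W) {p..q}"
    and iwF: "((\<lambda>s. w s * Fd s) has_integral J) {p..q}"
    and xi: "p < \<xi>" "\<xi> < q" and dFxi: "dF = (q - p) * Fd \<xi>"
    and sign: "\<forall>s\<in>{p<..<q}. (Fd s - Fd \<xi>) * (w s - w \<xi>) \<le> 0"
  shows "J \<le> dF / (q - p) * W"
proof -
  define c where "c = Fd \<xi>"
  have g2: "((\<lambda>s. c * w s + (- c * w \<xi>) + w \<xi> * Fd s) has_integral c * W + (- c * w \<xi>) * (q - p) + w \<xi> * dF) {p..q}"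
    using has_integral_add[OF has_integral_add[OF has_integral_mult_right[OF iw, of c] has_integral_const_real[of "- c * w \<xi>" p q]] has_integral_mult_right[OF iF, of "w \<xi>"]]
      pq by (simp add: mult_ac)
  have "J \<le> c * W + (- c * w \<xi>) * (q - p) + w \<xi> * dF"
  proof (rule has_integral_le)
    show "((\<lambda>s. w s * Fd s) has_integral J) {p<..<q}" using iwF by (simp add: has_integral_Icc_iff_Ioo[symmetric])
    show "((\<lambda>s. c * w s + (- c * w \<xi>) + w \<xi> * Fd s) has_integral c * W + (- c * w \<xi>) * (q - p) + w \<xi> * dF) {p<..<q}"
      using g2 by (simp add: has_integral_Icc_iff_Ioo[symmetric])
    fix s assume s: "s \<in> {p<..<q}"
    have "(Fd s - c) * (w s - w \<xi>) \<le> 0" using sign s unfolding c_def by auto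
    then show "w s * Fd s \<le> c * w s + (- c * w \<xi>) + w \<xi> * Fd s"
      by (simp add: algebra_simps)
  qed
  also have "c * W + (- c * w \<xi>) * (q - p) + w \<xi> * dF = c * W"
    unfolding dFxi c_def by (simp add: algebra_simps)
  also have "c = dF / (q - p)" using dFxi pq unfolding c_def by simp
  finally show ?thesis .
qed

definition fm :: "real \<Rightarrow> nat \<Rightarrow> real \<Rightarrow> real" where
  "fm \<alpha> m x = (x powr \<alpha>) ^ m / Gamma (1 + real m * \<alpha>)"

lemma fm_powr: "x > 0 \<Longrightarrow> fm \<alpha> m x = x powr (real m * \<alpha>) / Gamma (1 + real m * \<alpha>)"
  unfolding fm_def by (simp add: powr_power)

lemma fm_zero: "m \<ge> 1 \<Longrightarrow> fm \<alpha> m 0 = 0"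
  unfolding fm_def by simp

lemma fm_nonneg: "\<alpha> > 0 \<Longrightarrow> fm \<alpha> m x \<ge> 0"
  unfolding fm_def by (intro divide_nonneg_nonneg zero_le_power) (auto intro!: Gamma_real_nonneg add_pos_nonneg)

lemma fm_mono: "\<alpha> > 0 \<Longrightarrow> 0 \<le> x \<Longrightarrow> x \<le> y \<Longrightarrow> fm \<alpha> m x \<le> fm \<alpha> m y"
  unfolding fm_def by (intro divide_right_mono power_mono powr_mono2) (auto intro!: Gamma_real_nonneg add_pos_nonneg)

lemma fm_Suc_eq:
  assumes "x \<ge> 0"
  shows "fm \<alpha> (Suc m) x = x powr (real (Suc m) * \<alpha>) / Gamma (1 + real (Suc m) * \<alpha>)"
proof (cases "x = 0")
  case True then show ?thesis by (simp add: fm_def)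
next
  case False then show ?thesis using assms fm_powr[of x \<alpha> "Suc m"] by simp
qed

lemma F_deriv:
  fixes \<beta> s :: real
  assumes b: "0 < \<beta>" and s: "s > 0"
  shows "((\<lambda>s. s powr \<beta> / Gamma (1 + \<beta>)) has_real_derivative s powr (\<beta> - 1) / Gamma \<beta>) (at s)"
proof -
  have G1: "Gamma (1 + \<beta>) = \<beta> * Gamma \<beta>" by (rule Gamma_succ[OF b])
  have Gp: "Gamma \<beta> > 0" using b by (intro Gamma_real_pos) auto
  have d: "((\<lambda>s. s) has_real_derivative 1) (at s)"
    by (auto intro!: derivative_eq_intros)
  have "((\<lambda>s. s powr \<beta>) has_real_derivative \<beta> * s powr (\<beta> - real 1) * 1) (at s)"
    by (rule DERIV_fun_powr[OF d s])
  from DERIV_cdivide[OF this, of "Gamma (1 + \<beta>)"]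
  have "((\<lambda>s. s powr \<beta> / Gamma (1 + \<beta>)) has_real_derivative (\<beta> * s powr (\<beta> - real 1) * 1) / Gamma (1 + \<beta>)) (at s)" .
  also have "(\<beta> * s powr (\<beta> - real 1) * 1) / Gamma (1 + \<beta>) = s powr (\<beta> - 1) / Gamma \<beta>"
    unfolding G1 using b Gp by simp
  finally show ?thesis .
qed

lemma mvt_F:
  fixes \<beta> p q :: real
  assumes b: "0 < \<beta>" and pq: "0 \<le> p" "p < q"
  shows "\<exists>\<xi>. p < \<xi> \<and> \<xi> < q \<and> (q powr \<beta> / Gamma (1 + \<beta>) - p powr \<beta> / Gamma (1 + \<beta>)) = (q - p) * (\<xi> powr (\<beta> - 1) / Gamma \<beta>)"
proof -
  have cont: "continuous_on {p..q} (\<lambda>s. s powr \<beta> / Gamma (1 + \<beta>))"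
  proof -
    have "continuous_on {p..q} (\<lambda>s. s powr \<beta>)"
      by (rule continuous_on_powr') (use b pq in \<open>auto intro!: continuous_intros\<close>)
    moreover have "Gamma (1 + \<beta>) > 0" by (rule Gamma_real_pos) (use b in simp)
    then have "Gamma (1 + \<beta>) \<noteq> 0" by simp
    ultimately show ?thesis by (intro continuous_on_divide) (auto intro: continuous_intros)
  qed
  obtain l z where z: "p < z" "z < q" and dz: "((\<lambda>s. s powr \<beta> / Gamma (1 + \<beta>)) has_real_derivative l) (at z)"
    and eq: "q powr \<beta> / Gamma (1 + \<beta>) - p powr \<beta> / Gamma (1 + \<beta>) = (q - p) * l"
    using MVT[OF pq(2) cont] F_deriv[OF b] pq real_differentiable_def by (smt (verit) greaterThanLessThan_iff)
  have "l = z powr (\<beta> - 1) / Gamma \<beta>"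
    using DERIV_unique[OF dz F_deriv[OF b]] z pq by simp
  then show ?thesis using z eq by blast
qed

lemma ratio_sum:
  fixes t :: "nat \<Rightarrow> real"
  assumes tm: "\<forall>k<Suc M. t k < t (Suc k)"
    and A3: "\<forall>k. 1 \<le> k \<and> k \<le> M \<longrightarrow> (t k - t (k - 1)) / (t (Suc k) - t k) \<le> \<rho>"
    and ri: "r < i" and iM: "i \<le> M"
  shows "t i - t r \<le> \<rho> * (t (Suc i) - t (Suc r))"
  using ri iM
proof (induction i)
  case 0 then show ?case by simp
next
  case (Suc i)
  have step: "t (Suc i) - t i \<le> \<rho> * (t (Suc (Suc i)) - t (Suc i))"
  proof -
    have pos: "t (Suc (Suc i)) - t (Suc i) > 0" using tm Suc.prems by simp
    have "(t (Suc i) - t i) / (t (Suc (Suc i)) - t (Suc i)) \<le> \<rho>"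
      using A3[rule_format, of "Suc i"] Suc.prems by simp
    then show ?thesis using pos by (simp add: divide_le_eq)
  qed
  show ?case
  proof (cases "r = i")
    case True then show ?thesis using step by simp
  next
    case False
    then have "t i - t r \<le> \<rho> * (t (Suc i) - t (Suc r))" using Suc by simp
    then show ?thesis using step by (simp add: algebra_simps)
  qed
qed


lemma omega_nonneg: "\<alpha> < 1 \<Longrightarrow> omega \<alpha> y \<ge> 0"
  unfolding omega_def by (intro divide_nonneg_pos) (auto intro!: Gamma_real_pos)

lemma omega_mono:
  assumes "\<alpha> > 0" "\<alpha> < 1" "s \<le> s'" "s' < T"
  shows "omega \<alpha> (T - s) \<le> omega \<alpha> (T - s')"
  unfolding omega_def using assms
  by (intro divide_right_mono powr_mono2') (auto intro!: Gamma_real_nonneg)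

lemma Fd_anti:
  fixes \<beta> :: real
  assumes "\<beta> \<le> 1" "\<beta> > 0" "0 < s" "s \<le> s'"
  shows "s' powr (\<beta> - 1) / Gamma \<beta> \<le> s powr (\<beta> - 1) / Gamma \<beta>"
  using assms by (intro divide_right_mono powr_mono2') (auto intro!: Gamma_real_nonneg)

lemma Fd_mono:
  fixes \<beta> :: real
  assumes "\<beta> \<ge> 1" "0 \<le> s" "s \<le> s'"
  shows "s powr (\<beta> - 1) / Gamma \<beta> \<le> s' powr (\<beta> - 1) / Gamma \<beta>"
  using assms by (intro divide_right_mono powr_mono2) (auto intro!: Gamma_real_nonneg)

lemma rho_powr_le:
  fixes \<rho> e :: real
  assumes "\<rho> > 0" "0 \<le> e" "e \<le> 1"
  shows "\<rho> powr e \<le> max 1 \<rho>"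
proof (cases "\<rho> \<le> 1")
  case True
  then have "\<rho> powr e \<le> 1 powr e" using assms by (intro powr_mono2) auto
  then show ?thesis by simp
next
  case False
  then have "\<rho> powr e \<le> \<rho> powr 1" using assms by (intro powr_mono) auto
  then show ?thesis using assms by simp
qed


lemma core:
  fixes t :: "nat \<Rightarrow> real" and \<alpha> \<rho> :: real and m i :: nat
  assumes a: "0 < \<alpha>" "\<alpha> < 1" and t0: "t 0 = 0" and tm: "\<forall>k<Suc i. t k < t (Suc k)"
    and rho: "\<rho> > 0"
    and A3: "\<forall>k. 1 \<le> k \<and> k \<le> i \<longrightarrow> (t k - t (k - 1)) / (t (Suc k) - t k) \<le> \<rho>"
  shows "fm \<alpha> m (t i) / max 1 \<rho> \<le> (\<Sum>k\<le>i. (fm \<alpha> (Suc m) (t (Suc k)) - fm \<alpha> (Suc m) (t k)) / (t (Suc k) - t k)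
            * integral {t k..t (Suc k)} (\<lambda>s. omega \<alpha> (t (Suc i) - s)))"
proof -
  define \<beta> where "\<beta> = real (Suc m) * \<alpha>"
  have bpos: "\<beta> > 0" using a unfolding \<beta>_def by simp
  define Fd where "Fd s = s powr (\<beta> - 1) / Gamma \<beta>" for s
  define T where "T = t (Suc i)"
  define G2 where "G2 = Gamma (2 - \<alpha>)"
  define W where "W k = ((T - t k) powr (1 - \<alpha>) - (T - t (Suc k)) powr (1 - \<alpha>)) / G2" for k
  define a' where "a' k = (fm \<alpha> (Suc m) (t (Suc k)) - fm \<alpha> (Suc m) (t k)) / (t (Suc k) - t k)" for k
  define c where "c = max 1 \<rho>"
  have cpos: "c \<ge> 1" unfolding c_def by simp
  have tle: "t k \<le> t l" if "k \<le> l" "l \<le> Suc i" for k l using mesh_le[OF tm that] .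
  have tnn: "t k \<ge> 0" if "k \<le> Suc i" for k using tle[of 0 k] that t0 by simp
  have tlt: "t k < t (Suc k)" if "k \<le> i" for k using tm that by simp
  have Tpos: "T > 0" unfolding T_def using mesh_less[OF tm, of 0 "Suc i"] t0 by simp
  have Wint: "((\<lambda>s. omega \<alpha> (T - s)) has_integral W k) {t k..t (Suc k)}" if "k \<le> i" for k
    unfolding W_def G2_def using that tlt[of k] tle[of "Suc k" "Suc i"]
    by (intro kernel_int a) (auto simp: T_def)
  have Wnn: "W k \<ge> 0" if "k \<le> i" for k
    using Wint[OF that] by (rule has_integral_nonneg) (use omega_nonneg a in auto)
  have Fsuc: "fm \<alpha> (Suc m) x = x powr \<beta> / Gamma (1 + \<beta>)" if "x \<ge> 0" for x
    unfolding \<beta>_def using fm_Suc_eq[OF that] by simp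
  have Fint: "(Fd has_integral (fm \<alpha> (Suc m) (t (Suc k)) - fm \<alpha> (Suc m) (t k))) {t k..t (Suc k)}"
    if "k \<le> i" for k
  proof -
    have "(Fd has_integral (t (Suc k) powr \<beta> - t k powr \<beta>) / Gamma (1 + \<beta>)) {t k..t (Suc k)}"
      unfolding Fd_def using that tlt[of k] tnn[of k] by (intro pow_int bpos) auto
    moreover have "(t (Suc k) powr \<beta> - t k powr \<beta>) / Gamma (1 + \<beta>) = fm \<alpha> (Suc m) (t (Suc k)) - fm \<alpha> (Suc m) (t k)"
      using Fsuc tnn that by (simp add: diff_divide_distrib)
    ultimately show ?thesis by simp
  qed
  have mvt: "\<exists>\<xi>. t k < \<xi> \<and> \<xi> < t (Suc k) \<and> fm \<alpha> (Suc m) (t (Suc k)) - fm \<alpha> (Suc m) (t k) = (t (Suc k) - t k) * Fd \<xi>"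
    if "k \<le> i" for k
    using mvt_F[OF bpos tnn[of k] tlt[of k]] that Fsuc tnn unfolding Fd_def by auto
  have a'eq: "\<exists>\<xi>. t k < \<xi> \<and> \<xi> < t (Suc k) \<and> a' k = Fd \<xi>" if k: "k \<le> i" for k
  proof -
    obtain \<xi> where "t k < \<xi>" "\<xi> < t (Suc k)" "fm \<alpha> (Suc m) (t (Suc k)) - fm \<alpha> (Suc m) (t k) = (t (Suc k) - t k) * Fd \<xi>"
      using mvt[OF k] by blast
    then show ?thesis unfolding a'_def using tlt[OF k] by (intro exI[of _ \<xi>]) auto
  qed
  have a'nn: "a' k \<ge> 0" if "k \<le> i" for k
    unfolding a'_def using tlt[OF that] tnn[of k] that
    by (intro divide_nonneg_pos) (auto intro!: fm_mono a simp: less_imp_le)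
  have RHS: "(\<Sum>k\<le>i. (fm \<alpha> (Suc m) (t (Suc k)) - fm \<alpha> (Suc m) (t k)) / (t (Suc k) - t k)
            * integral {t k..t (Suc k)} (\<lambda>s. omega \<alpha> (t (Suc i) - s))) = (\<Sum>k\<le>i. a' k * W k)"
    using Wint unfolding a'_def T_def by (intro sum.cong refl) (simp add: integral_unique)
  have RHSnn: "(\<Sum>k\<le>i. a' k * W k) \<ge> 0"
    using a'nn Wnn by (intro sum_nonneg mult_nonneg_nonneg) auto
  have main: "fm \<alpha> m (t i) / c \<le> (\<Sum>k\<le>i. a' k * W k)"
  proof (cases "\<beta> \<le> 1")
    case True
    have conv: "((\<lambda>s. omega \<alpha> (T - s) * Fd s) has_integral fm \<alpha> m T) {0..T}"
    proof -
      have "((\<lambda>s. omega \<alpha> (T - s) * Fd s) has_integral T powr (\<beta> - \<alpha>) / Gamma (1 + \<beta> - \<alpha>)) {0..T}"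
        unfolding Fd_def by (rule beta_conv[OF a Tpos bpos])
      moreover have "\<beta> - \<alpha> = real m * \<alpha>" "1 + \<beta> - \<alpha> = 1 + real m * \<alpha>"
        unfolding \<beta>_def by (simp_all add: algebra_simps)
      ultimately show ?thesis using fm_powr[OF Tpos, of \<alpha> m] by simp
    qed
    have split: "fm \<alpha> m T = (\<Sum>k\<in>{0..<Suc i}. integral {t k..t (Suc k)} (\<lambda>s. omega \<alpha> (T - s) * Fd s))"
    proof -
      have "integral {t 0..t (Suc i)} (\<lambda>s. omega \<alpha> (T - s) * Fd s)
          = (\<Sum>k\<in>{0..<Suc i}. integral {t k..t (Suc k)} (\<lambda>s. omega \<alpha> (T - s) * Fd s))"
        using conv t0 unfolding T_def by (intro mesh_integral[OF tm]) (auto dest: has_integral_integrable)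
      then show ?thesis using conv t0 integral_unique unfolding T_def by metis
    qed
    have each: "integral {t k..t (Suc k)} (\<lambda>s. omega \<alpha> (T - s) * Fd s) \<le> a' k * W k" if k: "k \<le> i" for k
    proof -
      obtain \<xi> where xi: "t k < \<xi>" "\<xi> < t (Suc k)"
        and dF: "fm \<alpha> (Suc m) (t (Suc k)) - fm \<alpha> (Suc m) (t k) = (t (Suc k) - t k) * Fd \<xi>"
        using mvt[OF k] by blast
      have sub: "{t k..t (Suc k)} \<subseteq> {0..T}" using tnn[of k] tle[of "Suc k" "Suc i"] k unfolding T_def by auto
      have iwF: "((\<lambda>s. omega \<alpha> (T - s) * Fd s) has_integral integral {t k..t (Suc k)} (\<lambda>s. omega \<alpha> (T - s) * Fd s)) {t k..t (Suc k)}"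
        using integrable_on_subinterval[OF has_integral_integrable[OF conv]] sub
        by (intro integrable_integral) auto
      have qT: "t (Suc k) \<le> T" using tle[of "Suc k" "Suc i"] k unfolding T_def by simp
      have sign: "\<forall>s\<in>{t k<..<t (Suc k)}. (Fd s - Fd \<xi>) * (omega \<alpha> (T - s) - omega \<alpha> (T - \<xi>)) \<le> 0"
      proof
        fix s assume s: "s \<in> {t k<..<t (Suc k)}"
        have spos: "s > 0" using s tnn[of k] k by auto
        have xpos: "\<xi> > 0" using xi tnn[of k] k by auto
        show "(Fd s - Fd \<xi>) * (omega \<alpha> (T - s) - omega \<alpha> (T - \<xi>)) \<le> 0"
        proof (cases "s \<le> \<xi>")
          case True
          have "Fd \<xi> \<le> Fd s" unfolding Fd_def using Fd_anti[OF \<open>\<beta> \<le> 1\<close> bpos spos True] .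
          moreover have "omega \<alpha> (T - s) \<le> omega \<alpha> (T - \<xi>)" using omega_mono[OF a True] xi qT by simp
          ultimately show ?thesis by (intro mult_nonneg_nonpos) auto
        next
          case False
          then have le: "\<xi> \<le> s" by simp
          have "Fd s \<le> Fd \<xi>" unfolding Fd_def using Fd_anti[OF \<open>\<beta> \<le> 1\<close> bpos xpos le] .
          moreover have "omega \<alpha> (T - \<xi>) \<le> omega \<alpha> (T - s)" using omega_mono[OF a le] s qT by simp
          ultimately show ?thesis by (intro mult_nonpos_nonneg) auto
        qed
      qed
      have "integral {t k..t (Suc k)} (\<lambda>s. omega \<alpha> (T - s) * Fd s)
          \<le> (fm \<alpha> (Suc m) (t (Suc k)) - fm \<alpha> (Suc m) (t k)) / (t (Suc k) - t k) * W k"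
        by (rule cheb[OF tlt[OF k] Fint[OF k] Wint[OF k] iwF xi dF sign])
      then show ?thesis unfolding a'_def .
    qed
    have "fm \<alpha> m T \<le> (\<Sum>k\<in>{0..<Suc i}. a' k * W k)"
      unfolding split using each by (intro sum_mono) auto
    also have "{0..<Suc i} = {..i}" by auto
    finally have fT: "fm \<alpha> m T \<le> (\<Sum>k\<le>i. a' k * W k)" .
    have "fm \<alpha> m (t i) \<le> fm \<alpha> m T"
      unfolding T_def using tnn[of i] tle[of i "Suc i"] by (intro fm_mono a) auto
    moreover have "fm \<alpha> m (t i) / c \<le> fm \<alpha> m (t i) / 1"
      using cpos fm_nonneg[OF a(1), of m "t i"] by (intro divide_left_mono) auto
    ultimately show ?thesis using fT by linarith
  next
    case False
    then have bgt: "\<beta> > 1" by simp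
    have m1: "m \<ge> 1"
    proof (rule ccontr)
      assume "\<not> m \<ge> 1" then have "m = 0" by simp
      then have "\<beta> = \<alpha>" unfolding \<beta>_def by simp
      then show False using bgt a by simp
    qed
    show ?thesis
    proof (cases "i = 0")
      case True
      then show ?thesis using RHSnn fm_zero[OF m1] t0 by simp
    next
      case False
      define X where "X = t i"
      have Xpos: "X > 0" unfolding X_def using mesh_less[OF tm, of 0 i] t0 False by simp
      define V where "V k = ((X - t k) powr (1 - \<alpha>) - (X - t (Suc k)) powr (1 - \<alpha>)) / G2" for k
      have Vint: "((\<lambda>s. omega \<alpha> (X - s)) has_integral V k) {t k..t (Suc k)}" if "k < i" for k
        unfolding V_def G2_def using that tlt[of k] tle[of "Suc k" i]
        by (intro kernel_int a) (auto simp: X_def)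
      have conv: "((\<lambda>s. omega \<alpha> (X - s) * Fd s) has_integral fm \<alpha> m X) {0..X}"
      proof -
        have "((\<lambda>s. omega \<alpha> (X - s) * Fd s) has_integral X powr (\<beta> - \<alpha>) / Gamma (1 + \<beta> - \<alpha>)) {0..X}"
          unfolding Fd_def by (rule beta_conv[OF a Xpos bpos])
        moreover have "\<beta> - \<alpha> = real m * \<alpha>" "1 + \<beta> - \<alpha> = 1 + real m * \<alpha>"
          unfolding \<beta>_def by (simp_all add: algebra_simps)
        ultimately show ?thesis using fm_powr[OF Xpos, of \<alpha> m] by simp
      qed
      have tm': "\<forall>k<i. t k < t (Suc k)" using tm by simp
      have split: "fm \<alpha> m X = (\<Sum>k\<in>{0..<i}. integral {t k..t (Suc k)} (\<lambda>s. omega \<alpha> (X - s) * Fd s))"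
      proof -
        have "integral {t 0..t i} (\<lambda>s. omega \<alpha> (X - s) * Fd s)
            = (\<Sum>k\<in>{0..<i}. integral {t k..t (Suc k)} (\<lambda>s. omega \<alpha> (X - s) * Fd s))"
          using conv t0 unfolding X_def by (intro mesh_integral[OF tm']) (auto dest: has_integral_integrable)
        then show ?thesis using conv t0 integral_unique unfolding X_def by metis
      qed
      define b where "b k = a' (Suc k)" for k
      have Fd_le_b: "Fd (t (Suc k)) \<le> b k" if k: "Suc k \<le> i" for k
      proof -
        obtain \<xi> where "t (Suc k) < \<xi>" "a' (Suc k) = Fd \<xi>" using a'eq[OF k] by blast
        then show ?thesis unfolding b_def Fd_def using tnn[of "Suc k"] k
          by (simp add: Fd_mono bgt less_imp_le)
      qed
      have b_le_Fd: "a' k \<le> Fd (t (Suc k))" if k: "k \<le> i" for k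
      proof -
        obtain \<xi> where "t k < \<xi>" "\<xi> < t (Suc k)" "a' k = Fd \<xi>" using a'eq[OF k] by blast
        then show ?thesis unfolding Fd_def using tnn[of k] k
          by (simp add: Fd_mono bgt less_imp_le)
      qed
      have each: "integral {t k..t (Suc k)} (\<lambda>s. omega \<alpha> (X - s) * Fd s) \<le> b k * V k" if k: "k < i" for k
      proof -
        have sub: "{t k..t (Suc k)} \<subseteq> {0..X}" using tnn[of k] tle[of "Suc k" i] k unfolding X_def by auto
        have iwF: "((\<lambda>s. omega \<alpha> (X - s) * Fd s) has_integral integral {t k..t (Suc k)} (\<lambda>s. omega \<alpha> (X - s) * Fd s)) {t k..t (Suc k)}"
          using integrable_on_subinterval[OF has_integral_integrable[OF conv]] sub
          by (intro integrable_integral) auto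
        have "integral {t k..t (Suc k)} (\<lambda>s. omega \<alpha> (X - s) * Fd s) \<le> Fd (t (Suc k)) * V k"
        proof (rule has_integral_le)
          show "((\<lambda>s. omega \<alpha> (X - s) * Fd s) has_integral integral {t k..t (Suc k)} (\<lambda>s. omega \<alpha> (X - s) * Fd s)) {t k<..<t (Suc k)}"
            using iwF by (simp add: has_integral_Icc_iff_Ioo[symmetric])
          show "((\<lambda>s. Fd (t (Suc k)) * omega \<alpha> (X - s)) has_integral Fd (t (Suc k)) * V k) {t k<..<t (Suc k)}"
            using has_integral_mult_right[OF Vint[OF k]] by (simp add: has_integral_Icc_iff_Ioo[symmetric])
          fix s assume s: "s \<in> {t k<..<t (Suc k)}"
          have "Fd s \<le> Fd (t (Suc k))" unfolding Fd_def using s tnn[of k] k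
            by (intro Fd_mono) (auto simp: bgt less_imp_le)
          then show "omega \<alpha> (X - s) * Fd s \<le> Fd (t (Suc k)) * omega \<alpha> (X - s)"
            using omega_nonneg[OF a(2), of "X - s"] by (simp add: mult.commute mult_right_mono)
        qed
        also have "\<dots> \<le> b k * V k"
        proof (rule mult_right_mono)
          show "Fd (t (Suc k)) \<le> b k" using Fd_le_b k by simp
          show "V k \<ge> 0" using Vint[OF k] by (rule has_integral_nonneg) (use omega_nonneg a in auto)
        qed
        finally show ?thesis .
      qed
      have s1: "fm \<alpha> m X \<le> (\<Sum>k\<in>{0..<i}. b k * V k)"
        unfolding split using each by (intro sum_mono) auto
      have Vsum: "(\<Sum>k\<in>{r..<i}. V k) = (X - t r) powr (1 - \<alpha>) / G2" if "r < i" for r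
      proof -
        have "(\<Sum>k\<in>{r..<i}. V k) = (\<Sum>k\<in>{r..<i}. (\<lambda>j. - ((X - t j) powr (1 - \<alpha>)) / G2) (Suc k) - (\<lambda>j. - ((X - t j) powr (1 - \<alpha>)) / G2) k)"
          unfolding V_def by (intro sum.cong refl) (simp add: diff_divide_distrib)
        also have "\<dots> = (X - t r) powr (1 - \<alpha>) / G2 - (X - t i) powr (1 - \<alpha>) / G2"
          using that by (subst sum_Suc_diff') auto
        finally show ?thesis unfolding X_def by simp
      qed
      have Wsum: "(\<Sum>k\<in>{r..<i}. W (Suc k)) = (T - t (Suc r)) powr (1 - \<alpha>) / G2" if "r < i" for r
      proof -
        have "(\<Sum>k\<in>{r..<i}. W (Suc k)) = (\<Sum>k\<in>{r..<i}. (\<lambda>j. - ((T - t (Suc j)) powr (1 - \<alpha>)) / G2) (Suc k) - (\<lambda>j. - ((T - t (Suc j)) powr (1 - \<alpha>)) / G2) k)"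
          unfolding W_def by (intro sum.cong refl) (simp add: diff_divide_distrib)
        also have "\<dots> = (T - t (Suc r)) powr (1 - \<alpha>) / G2 - (T - t (Suc i)) powr (1 - \<alpha>) / G2"
          using that by (subst sum_Suc_diff') auto
        finally show ?thesis unfolding T_def by simp
      qed
      have G2pos: "G2 > 0" unfolding G2_def using a by (intro Gamma_real_pos) auto
      have tails: "\<forall>r. 0 \<le> r \<longrightarrow> r < i \<longrightarrow> (\<Sum>k\<in>{r..<i}. V k) \<le> (\<Sum>k\<in>{r..<i}. c * W (Suc k))"
      proof (intro allI impI)
        fix r assume r: "0 \<le> r" "r < i"
        have rat: "X - t r \<le> \<rho> * (T - t (Suc r))"
          unfolding X_def T_def using ratio_sum[OF tm _ r(2) order.refl, of \<rho>] A3 by auto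
        have nn: "X - t r \<ge> 0" unfolding X_def using tle[of r i] r by simp
        have nn2: "T - t (Suc r) \<ge> 0" unfolding T_def using tle[of "Suc r" "Suc i"] r by simp
        have "(X - t r) powr (1 - \<alpha>) \<le> (\<rho> * (T - t (Suc r))) powr (1 - \<alpha>)"
          using rat nn a by (intro powr_mono2) auto
        also have "\<dots> = \<rho> powr (1 - \<alpha>) * (T - t (Suc r)) powr (1 - \<alpha>)"
          using rho nn2 by (simp add: powr_mult)
        also have "\<dots> \<le> c * (T - t (Suc r)) powr (1 - \<alpha>)"
          unfolding c_def using rho_powr_le[OF rho, of "1 - \<alpha>"] a by (intro mult_right_mono) auto
        finally have "(X - t r) powr (1 - \<alpha>) / G2 \<le> c * ((T - t (Suc r)) powr (1 - \<alpha>) / G2)"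
          using G2pos by (simp add: divide_right_mono)
        then show "(\<Sum>k\<in>{r..<i}. V k) \<le> (\<Sum>k\<in>{r..<i}. c * W (Suc k))"
          using Vsum[OF r(2)] Wsum[OF r(2)] by (simp add: sum_distrib_left[symmetric])
      qed
      have bmono: "\<forall>l. 0 \<le> l \<longrightarrow> Suc l < i \<longrightarrow> b l \<le> b (Suc l)"
      proof (intro allI impI)
        fix l assume l: "0 \<le> l" "Suc l < i"
        have "b l \<le> Fd (t (Suc (Suc l)))" unfolding b_def using b_le_Fd[of "Suc l"] l by simp
        also have "\<dots> \<le> b (Suc l)" using Fd_le_b[of "Suc l"] l by simp
        finally show "b l \<le> b (Suc l)" .
      qed
      have b0: "0 < i \<longrightarrow> b 0 \<ge> 0" unfolding b_def using a'nn[of 1] False by simp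
      have "(\<Sum>k\<in>{0..<i}. b k * V k) \<le> (\<Sum>k\<in>{0..<i}. b k * (c * W (Suc k)))"
        by (rule abel_ineq[OF bmono b0 tails])
      also have "\<dots> = c * (\<Sum>k\<in>{0..<i}. b k * W (Suc k))"
        by (simp add: sum_distrib_left mult_ac)
      also have "(\<Sum>k\<in>{0..<i}. b k * W (Suc k)) \<le> (\<Sum>k\<le>i. a' k * W k)"
      proof -
        obtain j where j: "i = Suc j" using False by (cases i) auto
        have "(\<Sum>k\<le>i. a' k * W k) = a' 0 * W 0 + (\<Sum>k\<le>j. a' (Suc k) * W (Suc k))"
          unfolding j by (rule sum.atMost_Suc_shift)
        moreover have "{0..<i} = {..j}" using j by auto
        moreover have "a' 0 * W 0 \<ge> 0" using a'nn Wnn by simp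
        ultimately show ?thesis unfolding b_def by simp
      qed
      then have "c * (\<Sum>k\<in>{0..<i}. b k * W (Suc k)) \<le> c * (\<Sum>k\<le>i. a' k * W k)"
        using cpos by (intro mult_left_mono) auto
      finally have "fm \<alpha> m X \<le> c * (\<Sum>k\<le>i. a' k * W k)" using s1 by linarith
      then show ?thesis unfolding X_def using cpos by (simp add: divide_le_eq mult.commute)
    qed
  qed
  show ?thesis using main RHS unfolding c_def by simp
qed


lemma comp_bound:
  fixes t :: "nat \<Rightarrow> real" and B :: "nat \<Rightarrow> nat \<Rightarrow> real"
  assumes a: "0 < \<alpha>" "\<alpha> < 1" and t0: "t 0 = 0" and tm: "\<forall>k<Suc j. t k < t (Suc k)"
    and rho: "\<rho> > 0" and piB: "\<pi>B > 0"
    and A3: "\<forall>k. 1 \<le> k \<and> k \<le> j \<longrightarrow> (t k - t (k - 1)) / (t (Suc k) - t k) \<le> \<rho>"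
    and hB: "\<forall>i\<le>j. (\<forall>k<i. B i (Suc k) \<le> B i k) \<and> B i i > 0"
    and A2: "\<forall>i\<le>j. \<forall>k\<le>i. B i (i - k) \<ge>
              1 / (\<pi>B * (t (Suc k) - t k)) * integral {t k..t (Suc k)} (\<lambda>s. omega \<alpha> (t (Suc i) - s))"
  shows "(\<Sum>i\<le>j. ptilde B j (j - i) * fm \<alpha> m (t i)) \<le> max 1 \<rho> * \<pi>B * fm \<alpha> (Suc m) (t (Suc j))"
proof -
  define K where "K = max 1 \<rho> * \<pi>B"
  have Kpos: "K > 0" unfolding K_def using piB by (simp add: max_def)
  define F where "F x = fm \<alpha> (Suc m) x" for x
  define R where "R i = (\<Sum>k\<le>i. B i (i - k) * (F (t (Suc k)) - F (t k)))" for i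
  have pos: "B i 0 > 0" if "i \<le> j" for i
    using B_ge_diag[of i B 0] hB that by force
  then have nz: "\<forall>k\<le>j. B k 0 \<noteq> 0" by (metis less_irrefl)
  have Pnn: "\<forall>i\<le>j. ptilde B j (j - i) \<ge> 0" by (rule ptilde_nonneg[OF hB])
  have tle: "t k \<le> t l" if "k \<le> l" "l \<le> Suc j" for k l using mesh_le[OF tm that] .
  have tnn: "t k \<ge> 0" if "k \<le> Suc j" for k using tle[of 0 k] that t0 by simp
  have Rb: "fm \<alpha> m (t i) / K \<le> R i" if i: "i \<le> j" for i
  proof -
    have tmi: "\<forall>k<Suc i. t k < t (Suc k)" using tm i by simp
    have A3i: "\<forall>k. 1 \<le> k \<and> k \<le> i \<longrightarrow> (t k - t (k - 1)) / (t (Suc k) - t k) \<le> \<rho>" using A3 i by simp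
    have c: "fm \<alpha> m (t i) / max 1 \<rho> \<le> (\<Sum>k\<le>i. (F (t (Suc k)) - F (t k)) / (t (Suc k) - t k)
            * integral {t k..t (Suc k)} (\<lambda>s. omega \<alpha> (t (Suc i) - s)))"
      unfolding F_def by (rule core[OF a t0 tmi rho A3i])
    also have "\<dots> \<le> (\<Sum>k\<le>i. \<pi>B * (B i (i - k) * (F (t (Suc k)) - F (t k))))"
    proof (rule sum_mono)
      fix k assume k: "k \<in> {..i}"
      have tau: "t (Suc k) - t k > 0" using tm k i by auto
      have dF: "F (t (Suc k)) - F (t k) \<ge> 0" unfolding F_def using tnn[of k] tle[of k "Suc k"] k i
        by (simp add: fm_mono a)
      have Bk: "B i (i - k) \<ge> 1 / (\<pi>B * (t (Suc k) - t k)) * integral {t k..t (Suc k)} (\<lambda>s. omega \<alpha> (t (Suc i) - s))"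
        using A2 i k by auto
      have "(F (t (Suc k)) - F (t k)) / (t (Suc k) - t k) * integral {t k..t (Suc k)} (\<lambda>s. omega \<alpha> (t (Suc i) - s))
          = \<pi>B * ((1 / (\<pi>B * (t (Suc k) - t k)) * integral {t k..t (Suc k)} (\<lambda>s. omega \<alpha> (t (Suc i) - s))) * (F (t (Suc k)) - F (t k)))"
        using piB tau by (simp add: field_simps)
      also have "\<dots> \<le> \<pi>B * (B i (i - k) * (F (t (Suc k)) - F (t k)))"
        using Bk dF piB by (intro mult_left_mono mult_right_mono) auto
      finally show "(F (t (Suc k)) - F (t k)) / (t (Suc k) - t k) * integral {t k..t (Suc k)} (\<lambda>s. omega \<alpha> (t (Suc i) - s))
          \<le> \<pi>B * (B i (i - k) * (F (t (Suc k)) - F (t k)))" .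
    qed
    also have "\<dots> = \<pi>B * R i" unfolding R_def by (simp add: sum_distrib_left)
    finally have "fm \<alpha> m (t i) / max 1 \<rho> \<le> \<pi>B * R i" .
    moreover have Mp: "max 1 \<rho> > 0" by simp
    ultimately have "fm \<alpha> m (t i) \<le> \<pi>B * R i * max 1 \<rho>" by (simp add: pos_divide_le_eq)
    then have "fm \<alpha> m (t i) \<le> R i * K" unfolding K_def by (simp add: mult_ac)
    then show ?thesis using Kpos by (simp add: pos_divide_le_eq)
  qed
  have tel: "F (t (Suc j)) - F (t 0) = (\<Sum>i\<le>j. ptilde B j (j - i) * R i)"
    unfolding R_def using telescope[of j B "\<lambda>k. F (t k)"] nz by simp
  have F0: "F (t 0) = 0" unfolding F_def t0 by (simp add: fm_zero)
  have "(\<Sum>i\<le>j. ptilde B j (j - i) * fm \<alpha> m (t i)) = K * (\<Sum>i\<le>j. ptilde B j (j - i) * (fm \<alpha> m (t i) / K))"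
    using Kpos by (simp add: sum_distrib_left field_simps)
  also have "\<dots> \<le> K * (\<Sum>i\<le>j. ptilde B j (j - i) * R i)"
    using Kpos Pnn Rb by (intro mult_left_mono sum_mono mult_left_mono) auto
  also have "\<dots> = K * F (t (Suc j))" using tel F0 by simp
  finally show ?thesis unfolding K_def F_def .
qed


lemma ml_fm:
  assumes a: "\<alpha> > 0" and c: "c \<ge> 0" and x: "x \<ge> 0"
  shows "summable (\<lambda>m. c ^ m * fm \<alpha> m x)"
    and "mittag_leffler \<alpha> (c * x powr \<alpha>) = (\<Sum>m. c ^ m * fm \<alpha> m x)"
proof -
  have eq: "(\<lambda>m. (c * x powr \<alpha>) ^ m / Gamma (1 + real m * \<alpha>)) = (\<lambda>m. c ^ m * fm \<alpha> m x)"
    unfolding fm_def by (simp add: power_mult_distrib)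
  have "summable (\<lambda>m. (c * x powr \<alpha>) ^ m / Gamma (1 + real m * \<alpha>))"
    using c x by (intro ml_summable a) auto
  then show "summable (\<lambda>m. c ^ m * fm \<alpha> m x)" unfolding eq .
  show "mittag_leffler \<alpha> (c * x powr \<alpha>) = (\<Sum>m. c ^ m * fm \<alpha> m x)"
    unfolding mittag_leffler_def eq ..
qed

lemma ml_step:
  fixes P t :: "nat \<Rightarrow> real"
  assumes a: "\<alpha> > 0" and K: "K \<ge> 0" and L: "\<Lambda> \<ge> 0"
    and tnn: "\<forall>i\<le>j. t i \<ge> 0" and T: "T \<ge> 0"
    and hc: "\<And>m. (\<Sum>i\<le>j. P i * fm \<alpha> m (t i)) \<le> K * fm \<alpha> (Suc m) T"
  shows "1 + \<Lambda> * (\<Sum>i\<le>j. P i * mittag_leffler \<alpha> (K * \<Lambda> * t i powr \<alpha>))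
           \<le> mittag_leffler \<alpha> (K * \<Lambda> * T powr \<alpha>)"
proof -
  define c where "c = K * \<Lambda>"
  have c: "c \<ge> 0" unfolding c_def using K L by simp
  have sm: "summable (\<lambda>m. c ^ m * fm \<alpha> m (t i))" if "i \<le> j" for i
    using ml_fm(1)[OF a c] tnn that by simp
  have smT: "summable (\<lambda>m. c ^ m * fm \<alpha> m T)" using ml_fm(1)[OF a c T] .
  have "(\<Sum>i\<le>j. P i * mittag_leffler \<alpha> (c * t i powr \<alpha>)) = (\<Sum>i\<le>j. \<Sum>m. P i * (c ^ m * fm \<alpha> m (t i)))"
    using ml_fm(2)[OF a c] tnn by (intro sum.cong refl) (simp add: suminf_mult sm)
  also have "\<dots> = (\<Sum>m. \<Sum>i\<le>j. P i * (c ^ m * fm \<alpha> m (t i)))"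
    by (rule suminf_sum[symmetric]) (auto intro!: summable_mult sm)
  finally have e1: "(\<Sum>i\<le>j. P i * mittag_leffler \<alpha> (c * t i powr \<alpha>)) = (\<Sum>m. \<Sum>i\<le>j. P i * (c ^ m * fm \<alpha> m (t i)))" .
  have sL: "summable (\<lambda>m. \<Sum>i\<le>j. P i * (c ^ m * fm \<alpha> m (t i)))"
    by (auto intro!: summable_sum summable_mult sm)
  have "\<Lambda> * (\<Sum>m. \<Sum>i\<le>j. P i * (c ^ m * fm \<alpha> m (t i))) = (\<Sum>m. \<Lambda> * (\<Sum>i\<le>j. P i * (c ^ m * fm \<alpha> m (t i))))"
    by (rule suminf_mult[OF sL, symmetric])
  also have "\<dots> \<le> (\<Sum>m. c ^ Suc m * fm \<alpha> (Suc m) T)"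
  proof (rule suminf_le)
    fix m
    have "\<Lambda> * (\<Sum>i\<le>j. P i * (c ^ m * fm \<alpha> m (t i))) = \<Lambda> * c ^ m * (\<Sum>i\<le>j. P i * fm \<alpha> m (t i))"
      by (simp add: sum_distrib_left mult_ac)
    also have "\<dots> \<le> \<Lambda> * c ^ m * (K * fm \<alpha> (Suc m) T)"
      using hc[of m] L c by (intro mult_left_mono) auto
    also have "\<dots> = c ^ Suc m * fm \<alpha> (Suc m) T" unfolding c_def by (simp add: mult_ac)
    finally show "\<Lambda> * (\<Sum>i\<le>j. P i * (c ^ m * fm \<alpha> m (t i))) \<le> c ^ Suc m * fm \<alpha> (Suc m) T" .
  next
    show "summable (\<lambda>m. \<Lambda> * (\<Sum>i\<le>j. P i * (c ^ m * fm \<alpha> m (t i))))" using sL by (rule summable_mult)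
    show "summable (\<lambda>m. c ^ Suc m * fm \<alpha> (Suc m) T)" using smT by (subst summable_Suc_iff)
  qed
  also have "\<dots> = (\<Sum>m. c ^ m * fm \<alpha> m T) - 1"
    using suminf_split_head[OF smT] by (simp add: fm_def)
  also have "\<dots> = mittag_leffler \<alpha> (c * T powr \<alpha>) - 1" using ml_fm(2)[OF a c T] by simp
  finally show ?thesis using e1 unfolding c_def by simp
qed


theorem theorem3p3:
  fixes N :: nat and T \<alpha> \<rho> \<pi>B \<Lambda> :: real
    and t :: "nat \<Rightarrow> real" and B :: "nat \<Rightarrow> nat \<Rightarrow> real"
    and g lam \<psi> :: "nat \<Rightarrow> real"
  assumes mesh0: "t 0 = 0" and meshN: "t N = T"
    and mesh_mono: "\<forall>k<N. t k < t (Suc k)"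
    and alpha: "0 < \<alpha>" "\<alpha> < 1"
    and A1: "\<forall>n<N. (\<forall>k<n. B n (Suc k) \<le> B n k) \<and> B n n > 0"
    and A2_pos: "\<pi>B > 0"
    and A2: "\<forall>n<N. \<forall>k\<le>n. B n (n - k) \<ge>
              1 / (\<pi>B * (t (Suc k) - t k)) * integral {t k..t (Suc k)} (\<lambda>s. omega \<alpha> (t (Suc n) - s))"
    and A3_pos: "\<rho> > 0"
    and A3: "\<forall>k. 1 \<le> k \<and> k \<le> N - 1 \<longrightarrow> (t k - t (k - 1)) / (t (Suc k) - t k) \<le> \<rho>"
    and g_nonneg: "\<forall>n. 1 \<le> n \<and> n \<le> N \<longrightarrow> g n \<ge> 0"
    and lam_nonneg: "\<forall>l<N. lam l \<ge> 0"
    and Lambda_pos: "\<Lambda> > 0"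
    and lam_sum: "(\<Sum>l<N. lam l) \<le> \<Lambda>"
    and psi_nonneg: "\<forall>k\<le>N. \<psi> k \<ge> 0"
    and ineq: "\<forall>n<N. (\<Sum>k\<le>n. B n (n - k) * (\<psi> (Suc k) - \<psi> k))
                 \<le> (\<Sum>k\<le>n. lam (n - k) * \<psi> k) + g (Suc n)"
  shows "\<forall>n<N. \<psi> (Suc n) \<le>
           mittag_leffler \<alpha> (max 1 \<rho> * \<pi>B * \<Lambda> * t (Suc n) powr \<alpha>) *
           (\<psi> 0 + Max {(\<Sum>j\<le>k. ptilde B k (k - j) * g (Suc j)) | k. k \<le> n})"
proof (intro allI impI)
  fix n assume nN: "n < N"
  define K where "K = max 1 \<rho> * \<pi>B"
  have Kpos: "K \<ge> 0" unfolding K_def using A2_pos by (simp add: max_def)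
  define c where "c = K * \<Lambda>"
  have cnn: "c \<ge> 0" unfolding c_def using Kpos Lambda_pos by simp
  define E where "E x = mittag_leffler \<alpha> (c * x powr \<alpha>)" for x
  define S where "S k = (\<Sum>j\<le>k. ptilde B k (k - j) * g (Suc j))" for k
  define Gm where "Gm = Max {S k | k. k \<le> n}"
  have setfin: "{S k | k. k \<le> n} = S ` {..n}" by auto
  have S_le: "S k \<le> Gm" if "k \<le> n" for k
    unfolding Gm_def setfin using that by (intro Max_ge) auto
  have hB: "\<forall>i\<le>k. (\<forall>l<i. B i (Suc l) \<le> B i l) \<and> B i i > 0" if "k \<le> n" for k
    using A1 that nN by auto
  have S_nn: "S k \<ge> 0" if k: "k \<le> n" for k
    unfolding S_def using ptilde_nonneg[OF hB[OF k]] g_nonneg k nN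
    by (intro sum_nonneg mult_nonneg_nonneg) auto
  have Gm_nn: "Gm \<ge> 0" using S_le[of 0] S_nn[of 0] by simp
  define v where "v = \<psi> 0 + Gm"
  have vnn: "v \<ge> 0" unfolding v_def using psi_nonneg Gm_nn by simp
  have tle: "t k \<le> t l" if "k \<le> l" "l \<le> N" for k l using mesh_le[OF mesh_mono that] .
  have tnn: "t k \<ge> 0" if "k \<le> N" for k using tle[of 0 k] that mesh0 by simp
  have Emono: "E x \<le> E y" if "0 \<le> x" "x \<le> y" for x y
    unfolding E_def using that cnn alpha
    by (intro ml_mono) (auto intro!: mult_left_mono powr_mono2)
  have E0: "E 0 = 1" unfolding E_def using ml_zero by simp
  have Enn: "E x \<ge> 0" if "0 \<le> x" for x
    using Emono[OF order.refl that] E0 by simp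
  have lamsum: "(\<Sum>k\<le>i. lam (i - k)) \<le> \<Lambda>" if i: "i < N" for i
  proof -
    have "(\<Sum>k\<le>i. lam (i - k)) = (\<Sum>l\<le>i. lam l)"
      by (rule sum.reindex_bij_witness[of _ "\<lambda>l. i - l" "\<lambda>k. i - k"]) auto
    also have "\<dots> \<le> (\<Sum>l<N. lam l)"
      using i lam_nonneg by (intro sum_mono2) auto
    finally show ?thesis using lam_sum by simp
  qed
  have claim: "\<psi> m \<le> E (t m) * v" if "m \<le> Suc n" for m
    using that
  proof (induction m rule: less_induct)
    case (less m)
    show ?case
    proof (cases m)
      case 0
      then show ?thesis using E0 mesh0 Gm_nn unfolding v_def by simp
    next
      case (Suc j)
      have jn: "j \<le> n" using less.prems Suc by simp
      have jN: "j < N" using jn nN by simp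
      have hBj: "\<forall>i\<le>j. (\<forall>l<i. B i (Suc l) \<le> B i l) \<and> B i i > 0" using hB[OF jn] .
      have pos: "B i 0 > 0" if "i \<le> j" for i
        using B_ge_diag[of i B 0] hBj that by force
      then have nz: "\<forall>k\<le>j. B k 0 \<noteq> 0" by (metis less_irrefl)
      have Pnn: "\<forall>i\<le>j. ptilde B j (j - i) \<ge> 0" by (rule ptilde_nonneg[OF hBj])
      define R where "R i = (\<Sum>k\<le>i. B i (i - k) * (\<psi> (Suc k) - \<psi> k))" for i
      have tel: "\<psi> (Suc j) - \<psi> 0 = (\<Sum>i\<le>j. ptilde B j (j - i) * R i)"
        unfolding R_def using telescope[of j B \<psi>] nz by simp
      have Rb: "R i \<le> \<Lambda> * (E (t i) * v) + g (Suc i)" if i: "i \<le> j" for i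
      proof -
        have "R i \<le> (\<Sum>k\<le>i. lam (i - k) * \<psi> k) + g (Suc i)"
          unfolding R_def using ineq i jN by auto
        also have "(\<Sum>k\<le>i. lam (i - k) * \<psi> k) \<le> (\<Sum>k\<le>i. lam (i - k) * (E (t i) * v))"
        proof (rule sum_mono)
          fix k assume k: "k \<in> {..i}"
          have "\<psi> k \<le> E (t k) * v" using less.IH[of k] k i Suc less.prems by auto
          also have "\<dots> \<le> E (t i) * v"
            using Emono[of "t k" "t i"] tnn[of k] tle[of k i] k i jN vnn by (intro mult_right_mono) auto
          finally have "\<psi> k \<le> E (t i) * v" .
          moreover have "lam (i - k) \<ge> 0" using lam_nonneg i jN by auto
          ultimately show "lam (i - k) * \<psi> k \<le> lam (i - k) * (E (t i) * v)" by (rule mult_left_mono)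
        qed
        also have "\<dots> = (\<Sum>k\<le>i. lam (i - k)) * (E (t i) * v)" by (simp add: sum_distrib_right)
        also have "\<dots> \<le> \<Lambda> * (E (t i) * v)"
          using lamsum[of i] i jN Enn[of "t i"] tnn[of i] vnn by (intro mult_right_mono) auto
        finally show ?thesis by simp
      qed
      have "\<psi> (Suc j) = \<psi> 0 + (\<Sum>i\<le>j. ptilde B j (j - i) * R i)" using tel by simp
      also have "(\<Sum>i\<le>j. ptilde B j (j - i) * R i) \<le> (\<Sum>i\<le>j. ptilde B j (j - i) * (\<Lambda> * (E (t i) * v) + g (Suc i)))"
        using Pnn Rb by (intro sum_mono mult_left_mono) auto
      also have "\<dots> = v * (\<Lambda> * (\<Sum>i\<le>j. ptilde B j (j - i) * E (t i))) + S j"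
        unfolding S_def by (simp add: distrib_left sum.distrib sum_distrib_left mult_ac)
      finally have "\<psi> (Suc j) \<le> \<psi> 0 + S j + v * (\<Lambda> * (\<Sum>i\<le>j. ptilde B j (j - i) * E (t i)))" by simp
      also have "\<psi> 0 + S j \<le> v" unfolding v_def using S_le[OF jn] by simp
      also have "v + v * (\<Lambda> * (\<Sum>i\<le>j. ptilde B j (j - i) * E (t i))) = v * (1 + \<Lambda> * (\<Sum>i\<le>j. ptilde B j (j - i) * E (t i)))"
        by (simp add: algebra_simps)
      also have "\<dots> \<le> v * E (t (Suc j))"
      proof (rule mult_left_mono[OF _ vnn])
        have tmj: "\<forall>k<Suc j. t k < t (Suc k)" using mesh_mono jN by auto
        have A3j: "\<forall>k. 1 \<le> k \<and> k \<le> j \<longrightarrow> (t k - t (k - 1)) / (t (Suc k) - t k) \<le> \<rho>" using A3 jN by auto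
        have A2j: "\<forall>i\<le>j. \<forall>k\<le>i. B i (i - k) \<ge>
              1 / (\<pi>B * (t (Suc k) - t k)) * integral {t k..t (Suc k)} (\<lambda>s. omega \<alpha> (t (Suc i) - s))"
          using A2 jN by auto
        have hc: "(\<Sum>i\<le>j. ptilde B j (j - i) * fm \<alpha> m (t i)) \<le> K * fm \<alpha> (Suc m) (t (Suc j))" for m
          unfolding K_def by (rule comp_bound[OF alpha mesh0 tmj A3_pos A2_pos A3j hBj A2j])
        have "1 + \<Lambda> * (\<Sum>i\<le>j. ptilde B j (j - i) * mittag_leffler \<alpha> (K * \<Lambda> * t i powr \<alpha>))
           \<le> mittag_leffler \<alpha> (K * \<Lambda> * t (Suc j) powr \<alpha>)"
          by (rule ml_step[OF alpha(1) Kpos less_imp_le[OF Lambda_pos] _ _ hc]) (use tnn jN in auto)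
        then show "1 + \<Lambda> * (\<Sum>i\<le>j. ptilde B j (j - i) * E (t i)) \<le> E (t (Suc j))"
          unfolding E_def c_def .
      qed
      finally show ?thesis using Suc by (simp add: mult.commute)
    qed
  qed
  have "\<psi> (Suc n) \<le> E (t (Suc n)) * v" using claim by simp
  then show "\<psi> (Suc n) \<le> mittag_leffler \<alpha> (max 1 \<rho> * \<pi>B * \<Lambda> * t (Suc n) powr \<alpha>) *
           (\<psi> 0 + Max {(\<Sum>j\<le>k. ptilde B k (k - j) * g (Suc j)) | k. k \<le> n})"
    unfolding E_def c_def K_def v_def Gm_def S_def .
qed

end
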